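(* Let $K$ be a number field, let $\alpha>1$ be real, and let $F\in K[[x^{\mathbb{R}}]]$ be a Hahn series satisfying $\sum_{i=0}^d P_i(x)F(x^{\alpha^i})=0$ for some polynomials $P_0,\dots,P_d\in K[x]$ with $P_d\ne0$. For $s\in\mathbb{R}$ let $T(s)=\alpha^{\mathbb{Z}}s+\mathbb{Z}[\alpha,\alpha^{-1}]=\{\alpha^m s+r: m\in\mathbb{Z},\ r\in\mathbb{Z}[\alpha,\alpha^{-1}]\}$; these sets are the equivalence classes of the relation $x\sim y$ iff $\alpha^m x+r=y$ for some $m\in\mathbb{Z}$, $r\in\mathbb{Z}[\alpha,\alpha^{-1}]$. Let $\widehat{P(F)}$ be the set of equivalence classes meeting $P(F)$. Then $$F(x)=\sum_{T(s)\in\widehat{P(F)}}{}_{T(s)}[F(x)],$$ and each ${}_{T(s)}[F]$ is $\alpha$-Mahler, satisfying the same equation $\sum_{i=0}^d P_i(x)\,{}_{T(s)}[F](x^{\alpha^i})=0$.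
   Context: $K[[x^{\mathbb{R}}]]$ is the field of Hahn series $\sum_{i\in\mathbb{R}} f_ix^i$ ($f_i\in K$) with well-ordered support $P(F)=\{i:f_i\ne0\}$; $F(x^\gamma)=\sum_i f_ix^{\gamma i}$. $\mathbb{Z}[\alpha,\alpha^{-1}]$ is the subring of $\mathbb{R}$ generated by $\alpha$ and $\alpha^{-1}$. For $A\subseteq\mathbb{R}$, ${}_A[G]$ denotes the Hahn series consisting of the terms of $G$ with exponents in $A$. *)

theory Defs
  imports "HOL-Analysis.Analysis" "HOL-Computational_Algebra.Polynomial"
begin

definition number_field :: "complex set \<Rightarrow> bool" where
  "number_field K \<longleftrightarrow>
     0 \<in> K \<and> 1 \<in> K \<and>
     (\<forall>x\<in>K. \<forall>y\<in>K. x + y \<in> K \<and> x - y \<in> K \<and> x * y \<in> K) \<and>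
     (\<forall>x\<in>K. x \<noteq> 0 \<longrightarrow> inverse x \<in> K) \<and>
     (\<exists>B. finite B \<and> B \<subseteq> K \<and>
        (\<forall>x\<in>K. \<exists>q. (\<forall>b\<in>B. q b \<in> \<rat>) \<and> x = (\<Sum>b\<in>B. q b * b)))"

text \<open>A Hahn series with real exponents is represented by its coefficient function
  \<open>real \<Rightarrow> 'a\<close>; its support must be well-ordered.\<close>
definition hahn_support :: "(real \<Rightarrow> 'a::zero) \<Rightarrow> real set" where
  "hahn_support f = {i. f i \<noteq> 0}"

definition well_ordered_set :: "real set \<Rightarrow> bool" where
  "well_ordered_set S \<longleftrightarrow> (\<forall>A. A \<subseteq> S \<longrightarrow> A \<noteq> {} \<longrightarrow> (\<exists>m\<in>A. \<forall>x\<in>A. m \<le> x))"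

definition is_hahn_series :: "'a::zero set \<Rightarrow> (real \<Rightarrow> 'a) \<Rightarrow> bool" where
  "is_hahn_series K f \<longleftrightarrow> (\<forall>i. f i \<in> K) \<and> well_ordered_set (hahn_support f)"

text \<open>\<open>F(x^\<gamma>)\<close>: the coefficient at exponent \<open>j\<close> is \<open>f (j/\<gamma>)\<close> (for \<open>\<gamma> > 0\<close>).\<close>
definition hahn_subst :: "(real \<Rightarrow> 'a) \<Rightarrow> real \<Rightarrow> (real \<Rightarrow> 'a)" where
  "hahn_subst f \<gamma> = (\<lambda>j. f (j / \<gamma>))"

definition poly_hahn_mult :: "'a::comm_ring_1 poly \<Rightarrow> (real \<Rightarrow> 'a) \<Rightarrow> (real \<Rightarrow> 'a)" where
  "poly_hahn_mult p f = (\<lambda>j. \<Sum>k\<le>degree p. coeff p k * f (j - real k))"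

definition mahler_eq :: "real \<Rightarrow> nat \<Rightarrow> (nat \<Rightarrow> 'a::comm_ring_1 poly) \<Rightarrow> (real \<Rightarrow> 'a) \<Rightarrow> bool" where
  "mahler_eq \<alpha> d P f \<longleftrightarrow>
     (\<forall>j. (\<Sum>i\<le>d. poly_hahn_mult (P i) (hahn_subst f (\<alpha> ^ i)) j) = 0)"

definition Z_alpha :: "real \<Rightarrow> real set" where
  "Z_alpha \<alpha> = {r. \<exists>(S::int set) (c::int \<Rightarrow> int). finite S \<and> r = (\<Sum>k\<in>S. of_int (c k) * \<alpha> powi k)}"

definition T_class :: "real \<Rightarrow> real \<Rightarrow> real set" where
  "T_class \<alpha> s = {\<alpha> powi m * s + r | m r. r \<in> Z_alpha \<alpha>}"

definition hat_support :: "real \<Rightarrow> (real \<Rightarrow> 'a::zero) \<Rightarrow> real set set" where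
  "hat_support \<alpha> f = {C. \<exists>s. C = T_class \<alpha> s \<and> C \<inter> hahn_support f \<noteq> {}}"

definition hahn_restrict :: "real set \<Rightarrow> (real \<Rightarrow> 'a::zero) \<Rightarrow> (real \<Rightarrow> 'a)" where
  "hahn_restrict A f = (\<lambda>j. if j \<in> A then f j else 0)"

end

theory Submission imports Defs begin
lemma Z_alphaI: "finite S \<Longrightarrow> r = (\<Sum>k\<in>S. of_int (c k) * \<alpha> powi k) \<Longrightarrow> r \<in> Z_alpha \<alpha>"
  unfolding Z_alpha_def by blast
lemma Z_alphaE: assumes "r \<in> Z_alpha \<alpha>"
  obtains S c where "finite S" "r = (\<Sum>k\<in>S. of_int (c k) * \<alpha> powi k)"
  using assms unfolding Z_alpha_def by blast

lemma Z_alpha_add: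
  assumes "a \<in> Z_alpha \<alpha>" "b \<in> Z_alpha \<alpha>" shows "a + b \<in> Z_alpha \<alpha>"
proof -
  obtain S1 c1 where 1: "finite S1" "a = (\<Sum>k\<in>S1. of_int (c1 k) * \<alpha> powi k)"
    using assms(1) by (rule Z_alphaE)
  obtain S2 c2 where 2: "finite S2" "b = (\<Sum>k\<in>S2. of_int (c2 k) * \<alpha> powi k)"
    using assms(2) by (rule Z_alphaE)
  define c where "c k = (if k \<in> S1 then c1 k else 0) + (if k \<in> S2 then c2 k else 0)" for k
  have e1: "(\<Sum>k\<in>S1\<union>S2. of_int (if k \<in> S1 then c1 k else 0) * \<alpha> powi k) = a"
    unfolding 1 using 1(1) 2(1)
    by (intro sum.mono_neutral_cong_right) auto
  have e2: "(\<Sum>k\<in>S1\<union>S2. of_int (if k \<in> S2 then c2 k else 0) * \<alpha> powi k) = b"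
    unfolding 2 using 1(1) 2(1)
    by (intro sum.mono_neutral_cong_right) auto
  have "a + b = (\<Sum>k\<in>S1\<union>S2. of_int (c k) * \<alpha> powi k)"
    unfolding c_def e1[symmetric] e2[symmetric] sum.distrib[symmetric] of_int_add distrib_right ..
  then show ?thesis by (rule Z_alphaI[rotated]) (use 1(1) 2(1) in simp)
qed

lemma Z_alpha_mult:
  assumes "a \<in> Z_alpha \<alpha>" "\<alpha> \<noteq> 0" shows "\<alpha> powi n * a \<in> Z_alpha \<alpha>"
proof -
  obtain S1 c1 where 1: "finite S1" "a = (\<Sum>k\<in>S1. of_int (c1 k) * \<alpha> powi k)"
    using assms(1) by (rule Z_alphaE)
  have inj: "inj_on (\<lambda>k. k + n) S1" by (auto simp: inj_on_def)
  have "\<alpha> powi n * a = (\<Sum>k\<in>S1. of_int (c1 k) * \<alpha> powi (k + n))"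
    unfolding 1 sum_distrib_left
  proof (rule sum.cong)
    fix k show "\<alpha> powi n * (of_int (c1 k) * \<alpha> powi k) = of_int (c1 k) * \<alpha> powi (k + n)"
    proof -
      have h: "\<alpha> powi (k + n) = \<alpha> powi k * \<alpha> powi n"
        by (rule power_int_add) (use assms(2) in blast)
      show ?thesis by (simp only: h mult_ac)
    qed
  qed simp
  also have "\<dots> = (\<Sum>k\<in>(\<lambda>k. k + n) ` S1. of_int ((\<lambda>k. c1 (k - n)) k) * \<alpha> powi k)"
    unfolding sum.reindex[OF inj] o_def by simp
  finally show ?thesis by (rule Z_alphaI[rotated]) (use 1(1) in simp)
qed

lemma Z_alpha_neg:
  assumes "a \<in> Z_alpha \<alpha>" shows "- a \<in> Z_alpha \<alpha>"
proof -
  obtain S1 c1 where 1: "finite S1" "a = (\<Sum>k\<in>S1. of_int (c1 k) * \<alpha> powi k)"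
    using assms(1) by (rule Z_alphaE)
  have "- a = (\<Sum>k\<in>S1. of_int ((\<lambda>k. - c1 k) k) * \<alpha> powi k)"
    unfolding 1 by (simp add: sum_negf)
  then show ?thesis by (rule Z_alphaI[OF 1(1)])
qed

lemma Z_alpha_int: "of_int k * \<alpha> powi m \<in> Z_alpha \<alpha>"
  by (rule Z_alphaI[of "{m}" _ "\<lambda>_. k"]) simp_all

lemma Z_alpha_0: "0 \<in> Z_alpha \<alpha>"
  using Z_alpha_int[of 0 \<alpha> 0] by simp

lemma T_classI: "r \<in> Z_alpha \<alpha> \<Longrightarrow> x = \<alpha> powi m * s + r \<Longrightarrow> x \<in> T_class \<alpha> s"
  unfolding T_class_def by blast
lemma T_classE: assumes "x \<in> T_class \<alpha> s"
  obtains m r where "r \<in> Z_alpha \<alpha>" "x = \<alpha> powi m * s + r"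
  using assms unfolding T_class_def by blast

lemma T_self: "s \<in> T_class \<alpha> s"
  by (rule T_classI[OF Z_alpha_0, where m=0]) simp

lemma T_closed:
  assumes "x \<in> T_class \<alpha> s" "r \<in> Z_alpha \<alpha>" "\<alpha> \<noteq> 0"
  shows "\<alpha> powi n * x + r \<in> T_class \<alpha> s"
proof -
  obtain m r0 where x: "r0 \<in> Z_alpha \<alpha>" "x = \<alpha> powi m * s + r0"
    using assms(1) by (rule T_classE)
  have h: "\<alpha> powi (n + m) = \<alpha> powi n * \<alpha> powi m"
    by (rule power_int_add) (use assms(3) in blast)
  have "\<alpha> powi n * x + r = \<alpha> powi (n + m) * s + (\<alpha> powi n * r0 + r)"
    unfolding h x(2) by (simp add: algebra_simps)
  moreover have "\<alpha> powi n * r0 + r \<in> Z_alpha \<alpha>"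
    using Z_alpha_add Z_alpha_mult assms x by blast
  ultimately show ?thesis by (intro T_classI) 
qed

lemma T_eq:
  assumes "y \<in> T_class \<alpha> s" "\<alpha> \<noteq> 0"
  shows "T_class \<alpha> y = T_class \<alpha> s"
proof -
  obtain m r0 where y: "r0 \<in> Z_alpha \<alpha>" "y = \<alpha> powi m * s + r0"
    using assms(1) by (rule T_classE)
  have h: "\<alpha> powi (-m) * \<alpha> powi m = 1"
    using assms(2) by (simp add: power_int_minus)
  have h2: "\<alpha> powi m * \<alpha> powi (-m) = 1"
    using h by (simp only: mult.commute)
  have "s = \<alpha> powi (-m) * y + (- (\<alpha> powi (-m) * r0))"
    unfolding y(2) by (simp add: algebra_simps h h2)
  also have "\<dots> \<in> T_class \<alpha> y"
    by (intro T_closed T_self Z_alpha_neg Z_alpha_mult y assms)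
  finally have s: "s \<in> T_class \<alpha> y" .
  show ?thesis
  proof
    show "T_class \<alpha> y \<subseteq> T_class \<alpha> s"
    proof
      fix z assume "z \<in> T_class \<alpha> y"
      then obtain n r where "r \<in> Z_alpha \<alpha>" "z = \<alpha> powi n * y + r" by (rule T_classE)
      then show "z \<in> T_class \<alpha> s" using T_closed[OF assms(1) _ assms(2)] by simp
    qed
    show "T_class \<alpha> s \<subseteq> T_class \<alpha> y"
    proof
      fix z assume "z \<in> T_class \<alpha> s"
      then obtain n r where "r \<in> Z_alpha \<alpha>" "z = \<alpha> powi n * s + r" by (rule T_classE)
      then show "z \<in> T_class \<alpha> y" using T_closed[OF s _ assms(2)] by simp
    qed
  qed
qed

lemma shift_iff:
  assumes "\<alpha> > 1"
  shows "(j - real k) / \<alpha> ^ i \<in> T_class \<alpha> s \<longleftrightarrow> j \<in> T_class \<alpha> s"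
proof -
  have a0: "\<alpha> \<noteq> 0" using assms by simp
  have p: "\<alpha> ^ i \<noteq> 0" using a0 by simp
  show ?thesis
  proof
    assume h: "(j - real k) / \<alpha> ^ i \<in> T_class \<alpha> s"
    have "j = \<alpha> powi int i * ((j - real k) / \<alpha> ^ i) + of_int (int k) * \<alpha> powi 0"
      using p by (simp add: power_int_of_nat)
    also have "\<dots> \<in> T_class \<alpha> s" by (intro T_closed h Z_alpha_int a0)
    finally show "j \<in> T_class \<alpha> s" .
  next
    assume h: "j \<in> T_class \<alpha> s"
    have "(j - real k) / \<alpha> ^ i = \<alpha> powi (- int i) * j + of_int (- int k) * \<alpha> powi (- int i)"
      using p by (simp add: power_int_minus power_int_of_nat divide_inverse algebra_simps)
    also have "\<dots> \<in> T_class \<alpha> s" by (intro T_closed h Z_alpha_int a0)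
    finally show "(j - real k) / \<alpha> ^ i \<in> T_class \<alpha> s" .
  qed
qed
theorem mainTheorem7:
  fixes K :: "complex set" and \<alpha> :: real and F :: "real \<Rightarrow> complex"
    and d :: nat and P :: "nat \<Rightarrow> complex poly"
  assumes "number_field K"
    and "\<alpha> > 1"
    and "is_hahn_series K F"
    and "\<forall>i\<le>d. \<forall>k. coeff (P i) k \<in> K"
    and "P d \<noteq> 0"
    and "mahler_eq \<alpha> d P F"
  shows "(\<forall>j. ((\<lambda>C. hahn_restrict C F j) has_sum F j) (hat_support \<alpha> F))
       \<and> (\<forall>C\<in>hat_support \<alpha> F.
            is_hahn_series K (hahn_restrict C F) \<and> mahler_eq \<alpha> d P (hahn_restrict C F))"
proof (intro conjI allI ballI)
  have a0: "\<alpha> \<noteq> 0" using assms(2) by simp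
  fix j
  show "((\<lambda>C. hahn_restrict C F j) has_sum F j) (hat_support \<alpha> F)"
  proof (cases "F j = 0")
    case True
    then show ?thesis unfolding True by (intro has_sum_0) (simp add: True hahn_restrict_def)
  next
    case False
    define C0 where "C0 = T_class \<alpha> j"
    have C0: "C0 \<in> hat_support \<alpha> F"
      unfolding hat_support_def C0_def hahn_support_def using T_self[of j \<alpha>] False by blast
    have uniq: "C = C0" if h: "C \<in> hat_support \<alpha> F" "j \<in> C" for C
    proof -
      obtain s where "C = T_class \<alpha> s" using h(1) unfolding hat_support_def by blast
      then show ?thesis using T_eq[of j \<alpha> s] h(2) a0 unfolding C0_def by simp
    qed
    have "((\<lambda>C. hahn_restrict C F j) has_sum F j) {C0}"
      using has_sum_finite[of "{C0}" "\<lambda>C. hahn_restrict C F j"]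
      by (simp add: hahn_restrict_def C0_def T_self)
    moreover have "((\<lambda>C. hahn_restrict C F j) has_sum F j) (hat_support \<alpha> F) \<longleftrightarrow>
        ((\<lambda>C. hahn_restrict C F j) has_sum F j) {C0}"
      by (rule has_sum_cong_neutral) (use C0 uniq in \<open>auto simp: hahn_restrict_def\<close>)
    ultimately show ?thesis by simp
  qed
next
  fix C assume C: "C \<in> hat_support \<alpha> F"
  then obtain s where Cs: "C = T_class \<alpha> s" unfolding hat_support_def by blast
  have K0: "0 \<in> K" using assms(1) unfolding number_field_def by blast
  show "is_hahn_series K (hahn_restrict C F)"
  proof -
    have "hahn_support (hahn_restrict C F) \<subseteq> hahn_support F"
      by (auto simp: hahn_support_def hahn_restrict_def)
    then have "well_ordered_set (hahn_support (hahn_restrict C F))"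
      using assms(3) unfolding is_hahn_series_def well_ordered_set_def by (meson order_trans)
    moreover have "\<forall>i. hahn_restrict C F i \<in> K"
      using assms(3) K0 by (simp add: is_hahn_series_def hahn_restrict_def)
    ultimately show ?thesis unfolding is_hahn_series_def by blast
  qed
  show "mahler_eq \<alpha> d P (hahn_restrict C F)"
    unfolding mahler_eq_def
  proof
    fix j
    show "(\<Sum>i\<le>d. poly_hahn_mult (P i) (hahn_subst (hahn_restrict C F) (\<alpha> ^ i)) j) = 0"
    proof (cases "j \<in> C")
      case True
      then show ?thesis using assms(6) shift_iff[OF assms(2)]
        unfolding mahler_eq_def poly_hahn_mult_def hahn_subst_def hahn_restrict_def Cs
        by simp
    next
      case False
      then show ?thesis using shift_iff[OF assms(2)]
        unfolding poly_hahn_mult_def hahn_subst_def hahn_restrict_def Cs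
        by simp
    qed
  qed
qed

end
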